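(* Let $I\subseteq\mathbb{N}$ and let $(\mathcal{G}_N)_{N\in I}$ be a sequence of symmetric connected graphs with $\mathcal{G}_N=(\mathcal{V}_N,\mathcal{E}_N)$ and $|\mathcal{V}_N|=N$, with maximum degree $\deg_{\max}(N)$ and spectral gap $\lambda_1(N)$. Fix $q\in(0,1)$. If $\deg_{\max}(N)^2/\lambda_1(N)=o(N)$ as $N\to+\infty$, then the BGA with mixing parameter $q$ is asymptotically unbiased on this sequence, i.e. $\lim_{N\to+\infty}\mathbb{E}[\beta(\infty)]=0$, where $\mathbb{E}[\beta(\infty)]$ is computed for the BGA run on $\mathcal{G}_N$.
   Context: Graph and neighborhoods: for a graph $\mathcal{G}=(\mathcal{V},\mathcal{E})$ with $\mathcal{E}\subset\mathcal{V}\times\mathcal{V}$ and $N=|\mathcal{V}|$, the out-neighborhood of $v$ is $\mathcal{N}^+_v=\{u\in\mathcal{V}:(u,v)\in\mathcal{E}\}$ and the in-neighborhood is $\mathcal{N}^-_v=\{u\in\mathcal{V}:(v,u)\in\mathcal{E}\}$; $\deg^\pm_v=|\mathcal{N}^\pm_v|$, $\deg_{\max}=\max_v\max\{\deg^+_v,\deg^-_v\}$. The graph is symmetric if $\mathcal{N}^+_v=\mathcal{N}^-_v$ for all $v$. The spectral gap $\lambda_1$ is the smallest nonzero eigenvalue (in modulus) of the Laplacian matrix. BGA: given initial values $x_v(0)\in[0,L]$ and a mixing parameter $q\in(0,1)$, at each time $t\in\mathbb{Z}_{\ge0}$ one node $v$ is sampled uniformly at random from $\mathcal{V}$ (independently over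 time); every $u\in\mathcal{N}^+_v$ updates $x_u(t+1)=(1-q)x_u(t)+q\,x_v(t)$, and every $u\notin\mathcal{N}^+_v$ keeps $x_u(t+1)=x_u(t)$. Notation: $x_{\mathrm{ave}}(t)=N^{-1}\sum_v x_v(t)$, $\beta(t)=|x_{\mathrm{ave}}(t)-x_{\mathrm{ave}}(0)|^2$, $\mathbb{E}[\beta(\infty)]:=\lim_{t\to\infty}\mathbb{E}[\beta(t)]$. The BGA is asymptotically unbiased if $\lim_{N\to+\infty}\mathbb{E}[\beta(\infty)]=0$. *)

theory Defs
  imports "HOL-Probability.Probability" "HOL-Library.Landau_Symbols"
    "Jordan_Normal_Form.Char_Poly"
begin

text \<open>A graph on the vertex set V = {0..<N} is given by a relation E :: nat => nat => bool;
  E u v means (u,v) is an edge. Only vertices below N are relevant.\<close>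

definition out_nbhd :: "nat \<Rightarrow> (nat \<Rightarrow> nat \<Rightarrow> bool) \<Rightarrow> nat \<Rightarrow> nat set" where
  "out_nbhd N E v = {u. u < N \<and> E u v}"

definition in_nbhd :: "nat \<Rightarrow> (nat \<Rightarrow> nat \<Rightarrow> bool) \<Rightarrow> nat \<Rightarrow> nat set" where
  "in_nbhd N E v = {u. u < N \<and> E v u}"

definition deg_max :: "nat \<Rightarrow> (nat \<Rightarrow> nat \<Rightarrow> bool) \<Rightarrow> nat" where
  "deg_max N E = Max ((\<lambda>v. max (card (out_nbhd N E v)) (card (in_nbhd N E v))) ` {..<N})"

definition symmetric_graph :: "nat \<Rightarrow> (nat \<Rightarrow> nat \<Rightarrow> bool) \<Rightarrow> bool" where
  "symmetric_graph N E \<longleftrightarrow> (\<forall>v<N. out_nbhd N E v = in_nbhd N E v)"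

definition connected_graph :: "nat \<Rightarrow> (nat \<Rightarrow> nat \<Rightarrow> bool) \<Rightarrow> bool" where
  "connected_graph N E \<longleftrightarrow> 0 < N \<and>
     (\<forall>u<N. \<forall>v<N. (u, v) \<in> {(a, b). a < N \<and> b < N \<and> E a b}\<^sup>*)"

definition laplacian :: "nat \<Rightarrow> (nat \<Rightarrow> nat \<Rightarrow> bool) \<Rightarrow> real mat" where
  "laplacian N E = mat N N (\<lambda>(i, j).
      (if i = j then real (card (out_nbhd N E i)) else 0) - (if E i j then 1 else 0))"

definition spectral_gap :: "nat \<Rightarrow> (nat \<Rightarrow> nat \<Rightarrow> bool) \<Rightarrow> real" where
  "spectral_gap N E = Min {cmod k | k. eigenvalue (map_mat complex_of_real (laplacian N E)) k \<and> k \<noteq> 0}"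

definition bga_step :: "nat \<Rightarrow> (nat \<Rightarrow> nat \<Rightarrow> bool) \<Rightarrow> real \<Rightarrow> nat \<Rightarrow> (nat \<Rightarrow> real) \<Rightarrow> (nat \<Rightarrow> real)" where
  "bga_step N E q v x = (\<lambda>u. if u \<in> out_nbhd N E v then (1 - q) * x u + q * x v else x u)"

fun bga_dist :: "nat \<Rightarrow> (nat \<Rightarrow> nat \<Rightarrow> bool) \<Rightarrow> real \<Rightarrow> (nat \<Rightarrow> real) \<Rightarrow> nat \<Rightarrow> (nat \<Rightarrow> real) pmf" where
  "bga_dist N E q x0 0 = return_pmf x0"
| "bga_dist N E q x0 (Suc t) =
     bind_pmf (bga_dist N E q x0 t) (\<lambda>x. map_pmf (\<lambda>v. bga_step N E q v x) (pmf_of_set {..<N}))"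

definition x_ave :: "nat \<Rightarrow> (nat \<Rightarrow> real) \<Rightarrow> real" where
  "x_ave N x = (\<Sum>v<N. x v) / real N"

definition expected_beta :: "nat \<Rightarrow> (nat \<Rightarrow> nat \<Rightarrow> bool) \<Rightarrow> real \<Rightarrow> (nat \<Rightarrow> real) \<Rightarrow> nat \<Rightarrow> real" where
  "expected_beta N E q x0 t =
     measure_pmf.expectation (bga_dist N E q x0 t) (\<lambda>x. (x_ave N x - x_ave N x0)\<^sup>2)"

definition expected_beta_inf :: "nat \<Rightarrow> (nat \<Rightarrow> nat \<Rightarrow> bool) \<Rightarrow> real \<Rightarrow> (nat \<Rightarrow> real) \<Rightarrow> real" where
  "expected_beta_inf N E q x0 = lim (expected_beta N E q x0)"

end

theory Submission
  imports Defs "HOL-Analysis.Analysis" "Jordan_Normal_Form.Schur_Decomposition" "Jordan_Normal_Form.Spectral_Radius"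
begin


definition Ev :: "nat \<Rightarrow> (nat \<Rightarrow> nat \<Rightarrow> bool) \<Rightarrow> real \<Rightarrow> ((nat \<Rightarrow> real) \<Rightarrow> real) \<Rightarrow> (nat \<Rightarrow> real) \<Rightarrow> real" where
  "Ev N E q h x = (\<Sum>v<N. h (bga_step N E q v x)) / real N"

lemma bga_fin: "0 < N \<Longrightarrow> finite (set_pmf (bga_dist N E q x0 t))"
proof (induction t)
  case (Suc t)
  have "set_pmf (pmf_of_set {..<N}) = {..<N}" using Suc.prems by (intro set_pmf_of_set) auto
  with Suc show ?case by auto
qed auto

lemma bga_exp_suc:
  assumes "0 < N"
  shows "measure_pmf.expectation (bga_dist N E q x0 (Suc t)) h
       = measure_pmf.expectation (bga_dist N E q x0 t) (Ev N E q h)"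
proof -
  let ?p = "bga_dist N E q x0 t"
  have fin: "finite (set_pmf ?p)" using bga_fin assms by blast
  have ne: "{..<N} \<noteq> {}" using assms by auto
  have inner: "measure_pmf.expectation (map_pmf (\<lambda>v. bga_step N E q v x) (pmf_of_set {..<N})) h
      = Ev N E q h x" for x
    using ne by (simp add: integral_pmf_of_set Ev_def)
  have "measure_pmf.expectation (bga_dist N E q x0 (Suc t)) h
     = (\<Sum>a\<in>set_pmf ?p. pmf ?p a *\<^sub>R measure_pmf.expectation
          (map_pmf (\<lambda>v. bga_step N E q v a) (pmf_of_set {..<N})) h)"
    by (simp only: bga_dist.simps, rule pmf_expectation_bind[OF fin], insert ne, auto)
  also have "\<dots> = (\<Sum>a\<in>set_pmf ?p. pmf ?p a *\<^sub>R Ev N E q h a)" using inner by simp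
  also have "\<dots> = measure_pmf.expectation ?p (Ev N E q h)"
    by (rule integral_measure_pmf[OF fin, symmetric]) auto
  finally show ?thesis .
qed

lemma bga_exp_mono_le:
  assumes "0 < N" "\<And>x. Ev N E q g x \<le> g x"
  shows "measure_pmf.expectation (bga_dist N E q x0 (Suc t)) g
       \<le> measure_pmf.expectation (bga_dist N E q x0 t) g"
  unfolding bga_exp_suc[OF assms(1)]
  by (rule integral_mono) (use assms in \<open>auto intro!: integrable_measure_pmf_finite bga_fin\<close>)

lemma bga_exp_mono_ge:
  assumes "0 < N" "\<And>x. g x \<le> Ev N E q g x"
  shows "measure_pmf.expectation (bga_dist N E q x0 t) g
       \<le> measure_pmf.expectation (bga_dist N E q x0 (Suc t)) g"
  unfolding bga_exp_suc[OF assms(1)]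
  by (rule integral_mono) (use assms in \<open>auto intro!: integrable_measure_pmf_finite bga_fin\<close>)



definition symE :: "nat \<Rightarrow> (nat \<Rightarrow> nat \<Rightarrow> bool) \<Rightarrow> bool" where
  "symE N E \<longleftrightarrow> (\<forall>u<N. \<forall>v<N. E u v = E v u)"

lemma symmetric_symE: "symmetric_graph N E \<Longrightarrow> symE N E"
  unfolding symmetric_graph_def symE_def out_nbhd_def in_nbhd_def
  by (metis (mono_tags, lifting) mem_Collect_eq)

definition Sd :: "nat \<Rightarrow> (nat \<Rightarrow> nat \<Rightarrow> bool) \<Rightarrow> (nat \<Rightarrow> real) \<Rightarrow> nat \<Rightarrow> real" where
  "Sd N E x v = (\<Sum>u<N. if E u v then x v - x u else 0)"

definition Qf :: "nat \<Rightarrow> (nat \<Rightarrow> nat \<Rightarrow> bool) \<Rightarrow> (nat \<Rightarrow> real) \<Rightarrow> real" where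
  "Qf N E x = (\<Sum>v<N. \<Sum>u<N. if E u v then (x v - x u)^2 else 0)"

definition Wf :: "nat \<Rightarrow> (nat \<Rightarrow> real) \<Rightarrow> real" where
  "Wf N x = (\<Sum>u<N. (x u)^2)"

lemma step_lt: "u < N \<Longrightarrow> bga_step N E q v x u = x u + (if E u v then q * (x v - x u) else 0)"
  unfolding bga_step_def out_nbhd_def by (auto simp: algebra_simps)

lemma ave_step: "x_ave N (bga_step N E q v x) = x_ave N x + q / real N * Sd N E x v"
proof -
  have "(\<Sum>u<N. bga_step N E q v x u) = (\<Sum>u<N. x u) + q * Sd N E x v"
    unfolding Sd_def sum_distrib_left sum.distrib[symmetric]
    by (intro sum.cong refl) (auto simp: step_lt)
  thus ?thesis unfolding x_ave_def by (simp add: add_divide_distrib)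
qed

lemma sum_Sd: assumes "symE N E" shows "(\<Sum>v<N. Sd N E x v) = 0"
proof -
  let ?S = "\<Sum>v<N. Sd N E x v"
  have "?S = (\<Sum>u<N. \<Sum>v<N. if E u v then x v - x u else 0)"
    unfolding Sd_def by (rule sum.swap)
  also have "\<dots> = (\<Sum>u<N. \<Sum>v<N. - (if E v u then x u - x v else 0))"
    using assms unfolding symE_def by (intro sum.cong refl) auto
  also have "\<dots> = - ?S" unfolding Sd_def by (simp add: sum_negf)
  finally show ?thesis by simp
qed

lemma W_step: assumes "symE N E"
  shows "(\<Sum>v<N. Wf N (bga_step N E q v x)) = real N * Wf N x - q * (1 - q) * Qf N E x"
proof -
  define T where "T = (\<Sum>v<N. \<Sum>u<N. if E u v then x u * (x v - x u) else 0)"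
  have T2: "T = (\<Sum>v<N. \<Sum>u<N. if E u v then x v * (x u - x v) else 0)"
    unfolding T_def
    apply (subst sum.swap)
    using assms unfolding symE_def by (intro sum.cong refl) auto
  have "T + T = - Qf N E x"
    unfolding Qf_def
    apply (subst (2) T2) unfolding T_def sum.distrib[symmetric] sum_negf[symmetric]
    by (intro sum.cong refl) (auto simp: power2_eq_square algebra_simps)
  hence TQ: "T = - Qf N E x / 2" by simp
  have per: "Wf N (bga_step N E q v x) = Wf N x +
      (\<Sum>u<N. if E u v then 2 * q * (x u * (x v - x u)) + q^2 * (x v - x u)^2 else 0)" for v
    unfolding Wf_def sum.distrib[symmetric]
    by (intro sum.cong refl) (auto simp: step_lt power2_eq_square algebra_simps)
  have "(\<Sum>v<N. Wf N (bga_step N E q v x)) = real N * Wf N x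
      + (\<Sum>v<N. \<Sum>u<N. if E u v then 2 * q * (x u * (x v - x u)) + q^2 * (x v - x u)^2 else 0)"
    unfolding per sum.distrib by simp
  also have "(\<Sum>v<N. \<Sum>u<N. if E u v then 2 * q * (x u * (x v - x u)) + q^2 * (x v - x u)^2 else 0)
      = 2 * q * T + q^2 * Qf N E x"
    unfolding T_def Qf_def sum_distrib_left sum.distrib[symmetric]
    by (intro sum.cong refl) auto
  finally show ?thesis unfolding TQ by (simp add: power2_eq_square algebra_simps)
qed

lemma Sd_sq: "(Sd N E x v)^2 \<le> real (card {u. u < N \<and> E u v}) * (\<Sum>u<N. if E u v then (x v - x u)^2 else 0)"
proof -
  have "(Sd N E x v)^2 = (\<Sum>u<N. (if E u v then 1 else 0) * (if E u v then x v - x u else 0))^2"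
    unfolding Sd_def by (intro arg_cong[where f="\<lambda>t. t^2"] sum.cong) auto
  also have "\<dots> \<le> (\<Sum>u<N. (if E u v then 1 else (0::real))^2) * (\<Sum>u<N. (if E u v then x v - x u else 0)^2)"
    by (rule Cauchy_Schwarz_ineq_sum)
  also have "(\<Sum>u<N. (if E u v then 1 else (0::real))^2) = real (card {u. u < N \<and> E u v})"
  proof -
    have "(\<Sum>u<N. (if E u v then 1 else (0::real))^2) = (\<Sum>u\<in>{u\<in>{..<N}. E u v}. 1)"
      by (subst sum.inter_filter) (auto intro: sum.cong)
    also have "{u\<in>{..<N}. E u v} = {u. u < N \<and> E u v}" by auto
    finally show ?thesis by simp
  qed
  also have "(\<Sum>u<N. (if E u v then x v - x u else 0)^2) = (\<Sum>u<N. if E u v then (x v - x u)^2 else 0)"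
    by (intro sum.cong) auto
  finally show ?thesis .
qed



lemma Ev_g:
  assumes N: "0 < N" and s: "symE N E"
  shows "Ev N E q (\<lambda>x. (x_ave N x - c)^2) x
       = (x_ave N x - c)^2 + (q / real N)^2 * (\<Sum>v<N. (Sd N E x v)^2) / real N"
proof -
  let ?a = "x_ave N x - c"
  have "(\<Sum>v<N. (x_ave N (bga_step N E q v x) - c)^2)
      = (\<Sum>v<N. ?a^2 + 2 * ?a * (q / real N) * Sd N E x v + (q / real N)^2 * (Sd N E x v)^2)"
    by (intro sum.cong refl) (simp add: ave_step power2_eq_square algebra_simps)
  also have "\<dots> = real N * ?a^2 + 2 * ?a * (q / real N) * (\<Sum>v<N. Sd N E x v)
                    + (q / real N)^2 * (\<Sum>v<N. (Sd N E x v)^2)"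
    by (simp add: sum.distrib sum_distrib_left)
  also have "\<dots> = real N * ?a^2 + (q / real N)^2 * (\<Sum>v<N. (Sd N E x v)^2)"
    using sum_Sd[OF s] by simp
  finally show ?thesis unfolding Ev_def using N by (simp add: field_simps)
qed

lemma Ev_Phi:
  assumes N: "0 < N" and s: "symE N E" and q: "0 < q" "q < 1"
    and D: "\<And>v. v < N \<Longrightarrow> real (card {u. u < N \<and> E u v}) \<le> D"
  defines "\<alpha> \<equiv> q * D / ((1 - q) * real N ^ 2)"
  shows "Ev N E q (\<lambda>x. (x_ave N x - c)^2 + \<alpha> * Wf N x) x \<le> (x_ave N x - c)^2 + \<alpha> * Wf N x"
proof -
  have lin: "Ev N E q (\<lambda>x. (x_ave N x - c)^2 + \<alpha> * Wf N x) x
     = Ev N E q (\<lambda>x. (x_ave N x - c)^2) x + \<alpha> * (\<Sum>v<N. Wf N (bga_step N E q v x)) / real N"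
    unfolding Ev_def by (simp add: sum.distrib sum_distrib_left add_divide_distrib)
  have Q0: "0 \<le> Qf N E x" unfolding Qf_def by (intro sum_nonneg) auto
  have D0: "0 \<le> D" using D[of 0] N by (smt (verit) of_nat_0_le_iff)
  have SS: "(\<Sum>v<N. (Sd N E x v)^2) \<le> D * Qf N E x"
  proof -
    have "(\<Sum>v<N. (Sd N E x v)^2) \<le> (\<Sum>v<N. D * (\<Sum>u<N. if E u v then (x v - x u)^2 else 0))"
    proof (rule sum_mono)
      fix v assume v: "v \<in> {..<N}"
      have r0: "0 \<le> (\<Sum>u<N. if E u v then (x v - x u)^2 else 0)" by (intro sum_nonneg) auto
      show "(Sd N E x v)^2 \<le> D * (\<Sum>u<N. if E u v then (x v - x u)^2 else 0)"
        using Sd_sq[of N E x v] mult_right_mono[OF D[of v] r0] v by auto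
    qed
    thus ?thesis unfolding Qf_def sum_distrib_left .
  qed
  have key: "(q / real N)^2 * (\<Sum>v<N. (Sd N E x v)^2) \<le> \<alpha> * (q * (1 - q) * Qf N E x)"
  proof -
    have "\<alpha> * (q * (1 - q) * Qf N E x) = (q / real N)^2 * (D * Qf N E x)"
      unfolding \<alpha>_def using q N by (simp add: field_simps power2_eq_square)
    moreover have "(q / real N)^2 * (\<Sum>v<N. (Sd N E x v)^2) \<le> (q / real N)^2 * (D * Qf N E x)"
      by (rule mult_left_mono[OF SS]) simp
    ultimately show ?thesis by linarith
  qed
  have k2: "(q / real N)^2 * (\<Sum>v<N. (Sd N E x v)^2) / real N \<le> \<alpha> * (q * (1 - q) * Qf N E x) / real N"
    by (rule divide_right_mono[OF key]) simp
  have e: "\<alpha> * (real N * Wf N x - q * (1 - q) * Qf N E x) / real N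
     = \<alpha> * Wf N x - \<alpha> * (q * (1 - q) * Qf N E x) / real N"
    using N by (simp add: field_simps)
  show ?thesis unfolding lin Ev_g[OF N s] W_step[OF s] e using k2 by linarith
qed



lemma per_N:
  assumes N: "0 < N" and s: "symE N E" and q: "0 < q" "q < 1"
    and D: "\<And>v. v < N \<Longrightarrow> real (card {u. u < N \<and> E u v}) \<le> D"
    and x0: "\<And>v. v < N \<Longrightarrow> x0 v \<in> {0..L}"
  shows "convergent (expected_beta N E q x0) \<and> 0 \<le> expected_beta_inf N E q x0
        \<and> expected_beta_inf N E q x0 \<le> q * D * L^2 / ((1 - q) * real N)"
proof -
  define c where "c = x_ave N x0"
  define \<alpha> where "\<alpha> = q * D / ((1 - q) * real N ^ 2)"
  define g where "g = (\<lambda>x. (x_ave N x - c)^2)"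
  define \<Phi> where "\<Phi> = (\<lambda>x. (x_ave N x - c)^2 + \<alpha> * Wf N x)"
  let ?Ex = "\<lambda>t f. measure_pmf.expectation (bga_dist N E q x0 t) f"
  have D0: "0 \<le> D" using D[of 0] N by (smt (verit) of_nat_0_le_iff)
  have a0: "0 \<le> \<alpha>" unfolding \<alpha>_def using q D0 by simp
  have eb: "expected_beta N E q x0 t = ?Ex t g" for t
    unfolding expected_beta_def g_def c_def ..
  have inc: "incseq (expected_beta N E q x0)"
  proof (rule incseq_SucI)
    fix t show "expected_beta N E q x0 t \<le> expected_beta N E q x0 (Suc t)"
      unfolding eb g_def by (rule bga_exp_mono_ge[OF N]) (simp add: Ev_g[OF N s] sum_nonneg)
  qed
  have Phi_t: "?Ex t \<Phi> \<le> \<Phi> x0" for t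
  proof (induction t)
    case 0 show ?case by simp
  next
    case (Suc t)
    have "?Ex (Suc t) \<Phi> \<le> ?Ex t \<Phi>"
      unfolding \<Phi>_def by (rule bga_exp_mono_le[OF N]) (rule Ev_Phi[OF N s q D, folded \<alpha>_def])
    with Suc show ?case by linarith
  qed
  have W0: "Wf N x0 \<le> real N * L^2"
  proof -
    have "Wf N x0 \<le> (\<Sum>u<N. L^2)" unfolding Wf_def
    proof (rule sum_mono)
      fix u assume "u \<in> {..<N}" then have "0 \<le> x0 u" "x0 u \<le> L" using x0 by auto
      thus "(x0 u)^2 \<le> L^2" by (intro power_mono) auto
    qed
    thus ?thesis by simp
  qed
  have Phi0: "\<Phi> x0 \<le> q * D * L^2 / ((1 - q) * real N)"
  proof -
    have "\<Phi> x0 = \<alpha> * Wf N x0" unfolding \<Phi>_def c_def by simp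
    also have "\<dots> \<le> \<alpha> * (real N * L^2)" by (rule mult_left_mono[OF W0 a0])
    also have "\<dots> = q * D * L^2 / ((1 - q) * real N)" unfolding \<alpha>_def using N q
      by (simp add: field_simps power2_eq_square)
    finally show ?thesis .
  qed
  have bnd: "expected_beta N E q x0 t \<le> q * D * L^2 / ((1 - q) * real N)" for t
  proof -
    have "?Ex t g \<le> ?Ex t \<Phi>"
      unfolding g_def \<Phi>_def
      by (rule integral_mono) (use a0 in \<open>auto intro!: integrable_measure_pmf_finite bga_fin N simp: Wf_def sum_nonneg\<close>)
    thus ?thesis using Phi_t[of t] Phi0 unfolding eb by linarith
  qed
  have bdd: "bdd_above (range (expected_beta N E q x0))" using bnd by (intro bdd_aboveI[where M="q * D * L^2 / ((1 - q) * real N)"]) auto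
  have lim: "expected_beta N E q x0 \<longlonglongrightarrow> (SUP t. expected_beta N E q x0 t)"
    by (rule LIMSEQ_incseq_SUP[OF bdd inc])
  hence conv: "convergent (expected_beta N E q x0)" by (auto simp: convergent_def)
  have li: "expected_beta_inf N E q x0 = (SUP t. expected_beta N E q x0 t)"
    unfolding expected_beta_inf_def using lim by (rule limI)
  have nn: "0 \<le> expected_beta N E q x0 0" unfolding expected_beta_def by simp
  have "expected_beta N E q x0 0 \<le> (SUP t. expected_beta N E q x0 t)"
    by (rule cSUP_upper[OF _ bdd]) simp
  moreover have "(SUP t. expected_beta N E q x0 t) \<le> q * D * L^2 / ((1 - q) * real N)"
    by (rule cSUP_least) (use bnd in auto)
  ultimately show ?thesis using conv li nn by linarith
qed



definition mtr :: "'a::comm_ring_1 mat \<Rightarrow> 'a" where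
  "mtr A = (\<Sum>i<dim_row A. A $$ (i, i))"

lemma mtr_comm:
  fixes A B :: "'a::comm_ring_1 mat"
  assumes "A \<in> carrier_mat n n" "B \<in> carrier_mat n n"
  shows "mtr (A * B) = mtr (B * A)"
proof -
  have "mtr (A * B) = (\<Sum>i<n. \<Sum>j<n. A $$ (i, j) * B $$ (j, i))"
    unfolding mtr_def using assms by (auto simp: scalar_prod_def lessThan_atLeast0 intro!: sum.cong)
  also have "\<dots> = (\<Sum>j<n. \<Sum>i<n. B $$ (j, i) * A $$ (i, j))"
    by (subst sum.swap) (simp add: mult.commute)
  also have "\<dots> = mtr (B * A)"
    unfolding mtr_def using assms by (auto simp: scalar_prod_def lessThan_atLeast0 intro!: sum.cong)
  finally show ?thesis .
qed

lemma mtr_zero_if_no_nonzero_ev: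
  fixes A :: "complex mat"
  assumes A: "A \<in> carrier_mat n n" and nz: "\<And>k. eigenvalue A k \<Longrightarrow> k = 0"
  shows "mtr A = 0"
proof -
  obtain es where cp: "char_poly A = (\<Prod>a\<leftarrow>es. [:- a, 1:])" and len: "length es = n"
    using char_poly_factorized[OF A] by blast
  obtain B P Q where sd: "schur_decomposition A es = (B, P, Q)" by (cases "schur_decomposition A es") auto
  from schur_decomposition[OF A cp sd]
  have sim: "similar_mat_wit A B P Q" and dg: "diag_mat B = es" by auto
  from sim A have carr: "B \<in> carrier_mat n n" "P \<in> carrier_mat n n" "Q \<in> carrier_mat n n"
    and QP: "Q * P = 1\<^sub>m n" and AB: "A = P * B * Q"
    unfolding similar_mat_wit_def Let_def by auto
  have "mtr A = mtr (P * (B * Q))" using AB carr by simp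
  also have "\<dots> = mtr ((B * Q) * P)" by (rule mtr_comm) (use carr in auto)
  also have "(B * Q) * P = B" using carr QP by simp
  finally have tr: "mtr A = mtr B" .
  have "B $$ (i, i) = 0" if i: "i < n" for i
  proof -
    have "B $$ (i, i) \<in> set es" unfolding dg[symmetric] diag_mat_def using i carr by auto
    hence "poly (char_poly A) (B $$ (i, i)) = 0" unfolding cp by (rule linear_poly_root)
    hence "eigenvalue A (B $$ (i, i))" using eigenvalue_root_char_poly[OF A] by simp
    thus ?thesis by (rule nz)
  qed
  thus ?thesis unfolding tr unfolding mtr_def using carr by simp
qed



lemma deg_le:
  assumes "v < N"
  shows "card (out_nbhd N E v) \<le> deg_max N E" "card (in_nbhd N E v) \<le> deg_max N E"
proof -
  have "max (card (out_nbhd N E v)) (card (in_nbhd N E v)) \<le> deg_max N E"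
    unfolding deg_max_def by (rule Max_ge) (use assms in auto)
  thus "card (out_nbhd N E v) \<le> deg_max N E" "card (in_nbhd N E v) \<le> deg_max N E" by auto
qed

abbreviation LM :: "nat \<Rightarrow> (nat \<Rightarrow> nat \<Rightarrow> bool) \<Rightarrow> complex mat" where
  "LM N E \<equiv> map_mat complex_of_real (laplacian N E)"

lemma LM_carrier: "LM N E \<in> carrier_mat N N"
  unfolding laplacian_def by simp

lemma LM_index: "i < N \<Longrightarrow> j < N \<Longrightarrow> LM N E $$ (i, j) =
   complex_of_real ((if i = j then real (card (out_nbhd N E i)) else 0) - (if E i j then 1 else 0))"
  unfolding laplacian_def by simp

lemma ev_bound:
  assumes ev: "eigenvalue (LM N E) k"
  shows "cmod k \<le> 2 * real (deg_max N E)"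
proof -
  let ?M = "LM N E"
  obtain v where v: "v \<in> carrier_vec N" "v \<noteq> 0\<^sub>v N" "?M *\<^sub>v v = k \<cdot>\<^sub>v v"
    using ev LM_carrier[of N E] unfolding eigenvalue_def eigenvector_def by auto
  have dv: "dim_vec v = N" using v by auto
  obtain j0 where j0: "j0 < N" "v $ j0 \<noteq> 0"
  proof -
    have "\<exists>j<N. v $ j \<noteq> 0"
    proof (rule ccontr)
      assume "\<not> ?thesis"
      hence "v = 0\<^sub>v N" using dv by (intro eq_vecI) auto
      with v show False by simp
    qed
    thus ?thesis using that by blast
  qed
  have Nne: "{..<N} \<noteq> {}" using j0 by auto
  define m where "m = Max ((\<lambda>j. cmod (v $ j)) ` {..<N})"
  have m_in: "m \<in> (\<lambda>j. cmod (v $ j)) ` {..<N}" unfolding m_def by (rule Max_in) (use Nne in auto)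
  then obtain i where i: "i < N" "cmod (v $ i) = m" by auto
  have mge: "cmod (v $ j) \<le> m" if "j < N" for j unfolding m_def by (rule Max_ge) (use that in auto)
  have mpos: "0 < m" using mge[OF j0(1)] j0(2) by (smt (verit) norm_ge_zero zero_less_norm_iff)
  have "k * v $ i = (?M *\<^sub>v v) $ i" using v i by simp
  also have "\<dots> = (\<Sum>j<N. ?M $$ (i, j) * v $ j)"
    using i dv LM_carrier[of N E] by (simp add: scalar_prod_def lessThan_atLeast0)
  finally have eq: "k * v $ i = (\<Sum>j<N. ?M $$ (i, j) * v $ j)" .
  define r where "r j = (if i = j then real (card (out_nbhd N E i)) else 0) + (if E i j then 1 else 0)" for j
  have "cmod k * m = cmod (k * v $ i)" using i by (simp add: norm_mult)
  also have "\<dots> \<le> (\<Sum>j<N. cmod (?M $$ (i, j) * v $ j))" unfolding eq by (rule norm_sum)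
  also have "\<dots> \<le> (\<Sum>j<N. r j * m)"
  proof (rule sum_mono)
    fix j assume j: "j \<in> {..<N}"
    have "cmod (?M $$ (i, j)) = \<bar>(if i = j then real (card (out_nbhd N E i)) else 0) - (if E i j then 1 else 0)\<bar>"
      using i j by (simp only: LM_index norm_of_real lessThan_iff)
    also have "\<dots> \<le> r j" unfolding r_def by (rule abs_triangle_ineq4[THEN order_trans]) auto
    finally have a: "cmod (?M $$ (i, j)) \<le> r j" .
    show "cmod (?M $$ (i, j) * v $ j) \<le> r j * m"
      unfolding norm_mult by (rule mult_mono[OF a mge]) (use j in \<open>auto simp: r_def\<close>)
  qed
  also have "\<dots> = (\<Sum>j<N. r j) * m" by (simp add: sum_distrib_right)
  finally have km: "cmod k \<le> (\<Sum>j<N. r j)" using mpos by simp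
  have "(\<Sum>j<N. r j) = real (card (out_nbhd N E i)) + (\<Sum>j<N. if E i j then 1 else 0)"
    unfolding r_def sum.distrib using i by simp
  also have "(\<Sum>j<N. if E i j then 1 else (0::real)) = real (card (in_nbhd N E i))"
  proof -
    have "(\<Sum>j<N. if E i j then 1 else (0::real)) = (\<Sum>j\<in>{j\<in>{..<N}. E i j}. 1)"
      by (subst sum.inter_filter) auto
    also have "{j\<in>{..<N}. E i j} = in_nbhd N E i" unfolding in_nbhd_def by auto
    finally show ?thesis by simp
  qed
  finally show ?thesis using km deg_le[OF i(1), of E] by linarith
qed

lemma rtrancl_ne_step: "(u, v) \<in> R\<^sup>* \<Longrightarrow> u \<noteq> v \<Longrightarrow> \<exists>a b. (a, b) \<in> R \<and> a \<noteq> b"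
  by (induction rule: rtrancl_induct) auto

lemma trace_pos:
  assumes c: "connected_graph N E" and N2: "2 \<le> N"
  shows "mtr (LM N E) \<noteq> 0"
proof -
  let ?R = "{(a, b). a < N \<and> b < N \<and> E a b}"
  have "(0, 1) \<in> ?R\<^sup>*" using c N2 unfolding connected_graph_def by auto
  from rtrancl_ne_step[OF this] obtain a b where ab: "a < N" "b < N" "E a b" "a \<noteq> b" by auto
  define d where "d i = real (card (out_nbhd N E i)) - (if E i i then 1 else 0)" for i
  have fin: "finite (out_nbhd N E i)" for i unfolding out_nbhd_def by auto
  have d0: "0 \<le> d i" if "i < N" for i
  proof (cases "E i i")
    case True
    hence "i \<in> out_nbhd N E i" using that unfolding out_nbhd_def by auto
    hence "card (out_nbhd N E i) \<ge> 1" using fin[of i] by (metis One_nat_def Suc_leI card_gt_0_iff empty_iff)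
    thus ?thesis unfolding d_def using True by simp
  qed (simp add: d_def)
  have d1: "1 \<le> d b"
  proof -
    have sub: "(if E b b then {a, b} else {a}) \<subseteq> out_nbhd N E b"
      using ab unfolding out_nbhd_def by auto
    have "card (if E b b then {a, b} else {a}) \<le> card (out_nbhd N E b)"
      by (rule card_mono[OF fin sub])
    thus ?thesis unfolding d_def using ab(4) by (cases "E b b") auto
  qed
  have "d b \<le> (\<Sum>i<N. d i)"
    by (rule member_le_sum) (use ab d0 in auto)
  hence pos: "0 < (\<Sum>i<N. d i)" using d1 by linarith
  have "mtr (LM N E) = complex_of_real (\<Sum>i<N. d i)"
  proof -
    have "mtr (LM N E) = (\<Sum>i<N. LM N E $$ (i, i))" unfolding mtr_def using LM_carrier[of N E] by simp
    also have "\<dots> = (\<Sum>i<N. complex_of_real (d i))"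
      by (intro sum.cong refl) (simp only: LM_index lessThan_iff d_def, simp)
    finally show ?thesis by (simp add: of_real_sum)
  qed
  thus ?thesis using pos by (metis of_real_eq_0_iff less_irrefl)
qed

lemma gap_bounds:
  assumes c: "connected_graph N E" and N2: "2 \<le> N"
  shows "0 < spectral_gap N E" "spectral_gap N E \<le> 2 * real (deg_max N E)"
proof -
  let ?M = "LM N E"
  define S where "S = {cmod k | k. eigenvalue ?M k \<and> k \<noteq> 0}"
  have sg: "spectral_gap N E = Min S" unfolding spectral_gap_def S_def ..
  have "finite (spectrum ?M)" by (rule card_finite_spectrum[OF LM_carrier])
  hence finS: "finite S" unfolding S_def spectrum_def
    by (rule finite_subset[rotated, OF finite_imageI[of _ cmod]]) auto
  have "\<exists>k. eigenvalue ?M k \<and> k \<noteq> 0"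
  proof (rule ccontr)
    assume "\<not> ?thesis"
    hence "mtr ?M = 0" by (intro mtr_zero_if_no_nonzero_ev[OF LM_carrier]) auto
    with trace_pos[OF c N2] show False by simp
  qed
  then obtain k where k: "eigenvalue ?M k" "k \<noteq> 0" by auto
  have kS: "cmod k \<in> S" unfolding S_def using k by auto
  have ne: "S \<noteq> {}" using kS by auto
  have "Min S \<in> S" by (rule Min_in[OF finS ne])
  thus "0 < spectral_gap N E" unfolding sg S_def by auto
  have "Min S \<le> cmod k" by (rule Min_le[OF finS kS])
  thus "spectral_gap N E \<le> 2 * real (deg_max N E)" unfolding sg using ev_bound[OF k(1)] by linarith
qed



theorem corollary1:
  fixes I :: "nat set" and E :: "nat \<Rightarrow> nat \<Rightarrow> nat \<Rightarrow> bool"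
    and q L :: real and x0 :: "nat \<Rightarrow> nat \<Rightarrow> real"
  assumes graphs: "\<And>N. N \<in> I \<Longrightarrow> symmetric_graph N (E N) \<and> connected_graph N (E N)"
    and q: "0 < q" "q < 1"
    and init: "\<And>N v. N \<in> I \<Longrightarrow> v < N \<Longrightarrow> x0 N v \<in> {0..L}"
    and gap: "(\<lambda>N. real (deg_max N (E N)) ^ 2 / spectral_gap N (E N))
              \<in> o[sequentially \<sqinter> principal I](\<lambda>N. real N)"
  shows "(\<forall>N\<in>I. convergent (expected_beta N (E N) q (x0 N))) \<and>
         ((\<lambda>N. expected_beta_inf N (E N) q (x0 N)) \<longlongrightarrow> 0) (sequentially \<sqinter> principal I)"
proof -
  let ?F = "sequentially \<sqinter> principal I"
  let ?D = "\<lambda>N. real (deg_max N (E N))"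
  let ?f = "\<lambda>N. real (deg_max N (E N)) ^ 2 / spectral_gap N (E N)"
  define K where "K = q * L^2 / (1 - q)"
  have pN: "convergent (expected_beta N (E N) q (x0 N)) \<and> 0 \<le> expected_beta_inf N (E N) q (x0 N)
        \<and> expected_beta_inf N (E N) q (x0 N) \<le> q * ?D N * L^2 / ((1 - q) * real N)"
    if N: "N \<in> I" for N
  proof (rule per_N)
    show "0 < N" using graphs[OF N] unfolding connected_graph_def by auto
    show "symE N (E N)" using graphs[OF N] symmetric_symE by blast
    show "\<And>v. v < N \<Longrightarrow> real (card {u. u < N \<and> E N u v}) \<le> ?D N"
      using deg_le(1) unfolding out_nbhd_def by simp
  qed (use q init N in auto)
  have part1: "\<forall>N\<in>I. convergent (expected_beta N (E N) q (x0 N))" using pN by blast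
  have ev: "eventually (\<lambda>N. 0 \<le> expected_beta_inf N (E N) q (x0 N)
             \<and> expected_beta_inf N (E N) q (x0 N) \<le> K * 2 * (?f N / real N)) ?F"
    unfolding eventually_inf_principal
  proof (rule eventually_mono[OF eventually_ge_at_top[of 2]], intro impI)
    fix N :: nat assume N2: "2 \<le> N" and N: "N \<in> I"
    have g: "0 < spectral_gap N (E N)" "spectral_gap N (E N) \<le> 2 * ?D N"
      using gap_bounds[OF _ N2] graphs[OF N] by auto
    have Df: "?D N \<le> 2 * ?f N"
    proof (cases "?D N = 0")
      case True thus ?thesis using g by simp
    next
      case False
      hence Dp: "0 < ?D N" by simp
      have "?D N ^ 2 / (2 * ?D N) \<le> ?f N"
        by (rule divide_left_mono) (use g Dp in auto)
      moreover have "?D N ^ 2 / (2 * ?D N) = ?D N / 2" using Dp by (simp add: power2_eq_square)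
      ultimately show ?thesis by (simp add: mult.commute)
    qed
    have K0: "0 \<le> K" unfolding K_def using q by simp
    have "q * ?D N * L^2 / ((1 - q) * real N) = K * (?D N / real N)"
      unfolding K_def using q by (simp add: field_simps)
    also have "\<dots> \<le> K * (2 * ?f N / real N)"
      by (rule mult_left_mono[OF divide_right_mono[OF Df] K0]) simp
    finally show "0 \<le> expected_beta_inf N (E N) q (x0 N)
             \<and> expected_beta_inf N (E N) q (x0 N) \<le> K * 2 * (?f N / real N)"
      using pN[OF N] by simp
  qed
  have lim: "((\<lambda>N. K * 2 * (?f N / real N)) \<longlongrightarrow> 0) ?F"
    using tendsto_mult_right_zero[OF smalloD_tendsto[OF gap], of "K * 2"] by simp
  have "((\<lambda>N. expected_beta_inf N (E N) q (x0 N)) \<longlongrightarrow> 0) ?F"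
    by (rule tendsto_sandwich[OF _ _ tendsto_const lim]) (use ev in \<open>auto elim: eventually_mono\<close>)
  with part1 show ?thesis by blast
qed

end
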